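(* Let $\{R_k\},\{T_k\},\{a_k\},\{s_k\}$ be nonnegative sequences with $R_{k+1}+T_{k+1}\le R_k+(1+a_k)T_k+s_k$ for all $k\ge0$, $R_0,T_0<\infty$, $\sum_{k=0}^\infty s_k<\infty$, and $a_k=\hat\rho\rho_k$ for all $k$, where $\hat\rho\ge0$ and $\{\rho_k\}$ is nonnegative with $\sum_{k=0}^\infty\rho_k<\infty$ and $\sum_{k=0}^\infty k\rho_k<\infty$. Then there exists $\hat\rho_0>0$ (depending on $R_0,T_0,\{s_k\},\{\rho_k\}$) such that whenever $\hat\rho\in[0,\hat\rho_0]$ the sequence $\{R_k\}$ is bounded. *)

theory Defs
  imports "HOL-Analysis.Analysis"
begin

end

theory Submission
  imports Defs
begin

lemma growth_bound:
  fixes V s a :: "nat \<Rightarrow> real"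
  assumes "\<And>k. V k \<ge> 0" "\<And>k. s k \<ge> 0" "\<And>k. a k \<ge> 0"
    and "\<And>k. V (Suc k) \<le> (1 + a k) * V k + s k"
  shows "V n \<le> (V 0 + (\<Sum>j<n. s j)) * exp (\<Sum>j<n. a j)"
proof (induction n)
  case 0
  then show ?case by simp
next
  case (Suc n)
  have e1: "1 + a n \<le> exp (a n)" by (rule exp_ge_add_one_self)
  have sp: "0 \<le> (\<Sum>j<n. s j)" by (simp add: assms(2) sum_nonneg)
  have ge1: "1 \<le> exp (\<Sum>j<Suc n. a j)" using assms(3) by (simp add: sum_nonneg)
  have "V (Suc n) \<le> (1 + a n) * V n + s n" by (rule assms(4))
  also have "\<dots> \<le> exp (a n) * ((V 0 + (\<Sum>j<n. s j)) * exp (\<Sum>j<n. a j)) + s n"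
    using Suc.IH e1 assms(1,3)[of n]
    by (intro add_right_mono mult_mono) auto
  also have "\<dots> = (V 0 + (\<Sum>j<n. s j)) * exp (\<Sum>j<Suc n. a j) + s n"
    by (simp add: exp_add mult_ac)
  also have "\<dots> \<le> (V 0 + (\<Sum>j<n. s j)) * exp (\<Sum>j<Suc n. a j) + s n * exp (\<Sum>j<Suc n. a j)"
    using mult_left_mono[OF ge1 assms(2)[of n]] by simp
  also have "\<dots> = (V 0 + (\<Sum>j<Suc n. s j)) * exp (\<Sum>j<Suc n. a j)"
    by (simp add: algebra_simps)
  finally show ?case .
qed

theorem mainTheorem20:
  fixes R0 T0 :: real and s \<rho> :: "nat \<Rightarrow> real"
  assumes "R0 \<ge> 0" and "T0 \<ge> 0"
    and "\<And>k. s k \<ge> 0" and "summable s"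
    and "\<And>k. \<rho> k \<ge> 0" and "summable \<rho>"
    and "summable (\<lambda>k. real k * \<rho> k)"
  shows "\<exists>\<rho>0 > 0. \<forall>\<rho>h \<in> {0..\<rho>0}. \<forall>R T a :: nat \<Rightarrow> real.
           R 0 = R0 \<and> T 0 = T0 \<and>
           (\<forall>k. R k \<ge> 0 \<and> T k \<ge> 0 \<and> a k \<ge> 0) \<and>
           (\<forall>k. a k = \<rho>h * \<rho> k) \<and>
           (\<forall>k. R (Suc k) + T (Suc k) \<le> R k + (1 + a k) * T k + s k)
           \<longrightarrow> Bseq R"
proof (intro exI[of _ 1] conjI ballI allI impI)
  fix \<rho>h :: real and R T a :: "nat \<Rightarrow> real"
  assume h: "\<rho>h \<in> {0..1}"
  assume H: "R 0 = R0 \<and> T 0 = T0 \<and>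
           (\<forall>k. R k \<ge> 0 \<and> T k \<ge> 0 \<and> a k \<ge> 0) \<and>
           (\<forall>k. a k = \<rho>h * \<rho> k) \<and>
           (\<forall>k. R (Suc k) + T (Suc k) \<le> R k + (1 + a k) * T k + s k)"
  define V where "V k = R k + T k" for k
  have V0: "\<And>k. V k \<ge> 0" using H by (simp add: V_def add_nonneg_nonneg)
  have a0: "\<And>k. a k \<ge> 0" using H by blast
  have step: "V (Suc k) \<le> (1 + a k) * V k + s k" for k
  proof -
    have "R (Suc k) + T (Suc k) \<le> R k + (1 + a k) * T k + s k" using H by blast
    moreover have "R k \<le> (1 + a k) * R k"
    proof -
      have "0 \<le> a k * R k" using H a0[of k] by simp
      then show ?thesis by (simp add: algebra_simps)
    qed
    ultimately show ?thesis by (simp add: V_def algebra_simps)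
  qed
  have gb: "V n \<le> (V 0 + (\<Sum>j<n. s j)) * exp (\<Sum>j<n. a j)" for n
    by (rule growth_bound[where V=V and s=s and a=a, OF V0 assms(3) a0 step])
  define K where "K = (V 0 + suminf s) * exp (\<rho>h * suminf \<rho>)"
  have bnd: "V n \<le> K" for n
  proof -
    have s1: "(\<Sum>j<n. s j) \<le> suminf s" using assms(3,4) by (simp add: sum_le_suminf)
    have r1: "(\<Sum>j<n. \<rho> j) \<le> suminf \<rho>" using assms(5,6) by (simp add: sum_le_suminf)
    have "(\<Sum>j<n. a j) = \<rho>h * (\<Sum>j<n. \<rho> j)" using H by (simp add: sum_distrib_left)
    also have "\<dots> \<le> \<rho>h * suminf \<rho>" using h r1 by (simp add: mult_left_mono)
    finally have "exp (\<Sum>j<n. a j) \<le> exp (\<rho>h * suminf \<rho>)" by simp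
    moreover have "V 0 + (\<Sum>j<n. s j) \<le> V 0 + suminf s" using s1 by simp
    moreover have "0 \<le> V 0 + (\<Sum>j<n. s j)" using V0[of 0] assms(3) by (simp add: sum_nonneg)
    ultimately have "(V 0 + (\<Sum>j<n. s j)) * exp (\<Sum>j<n. a j) \<le> K"
      unfolding K_def by (intro mult_mono) auto
    with gb[of n] show ?thesis by simp
  qed
  show "Bseq R"
  proof (rule BseqI')
    fix n
    have "R n \<ge> 0" "T n \<ge> 0" using H by auto
    then show "norm (R n) \<le> K" using bnd[of n] by (simp add: V_def)
  qed
qed simp

end
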